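(* Let $r\ge 0$, $t>0$, $\phi,b\in\mathbb{R}$ and $f(\theta)=-r\cos(2\theta t-\phi)+b$, with derivative $f'(\theta)=2rt\sin(2\theta t-\phi)$. Define the curvature function $$w(\theta)=\begin{cases}\dfrac{f'(\theta)}{\mathrm{mod}\!\big(\theta-\frac{\phi}{2t}+\frac{\pi}{2t},\frac{2\pi}{2t}\big)-\frac{\pi}{2t}} & \theta\notin\{\frac{\phi+2\pi m}{2t}:m\in\mathbb{Z}\},\\ 4t^2r & \theta\in\{\frac{\phi+2\pi m}{2t}:m\in\mathbb{Z}\},\end{cases}$$ where a $0/0$ (denominator equal to $0$, which forces $f'(\theta)=0$) is replaced by... — more precisely, whenever the denominator is nonzero use the quotient. Then for every $\theta'\in\mathbb{R}$ for which the denominator is nonzero or $\theta'\in\{\frac{\phi+2\pi m}{2t}\}$, the quadratic $$q(\theta;\theta')=f(\theta')+f'(\theta')(\theta-\theta')+\tfrac12 w(\theta')(\theta-\theta')^2$$ satisfies $q(\theta';\theta')=f(\theta')$ and $q(\theta;\theta')\ge f(\theta)$ for all $\theta\in\mathbb{R}$. Consequently, for $f_i(\theta)=-r_i\cos(2\theta t_i-\phi_i)+b_i$ ($i=1,\dots,T$, $r_i\ge0$, $t_i>0$) with corresponding $w_i$, if $\sum_iw_i(\theta')>0$ then $\theta^+=\theta'-\sum_if_i'(\theta')/\sum_iw_i(\theta')$ satisfies $\sum_if_i(\theta^+)\le\sum_if_i(\theta')$.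
   Context: For $a\in\mathbb{R}$, $p>0$, $\mathrm{mod}(a,p)=a-p\lfloor a/p\rfloor\in[0,p)$. The denominator in the first case of $w$ vanishes exactly when $\theta\in\{\frac{\phi+\pi+2\pi m}{2t}:m\in\mathbb{Z}\}$ (the maximizers of $f$), where $f'=0$; these points are excluded from the claim. *)

theory Defs
  imports Complex_Main
begin

definition rmod :: "real \<Rightarrow> real \<Rightarrow> real" where
  "rmod a p = a - p * of_int \<lfloor>a / p\<rfloor>"

definition fcos :: "real \<Rightarrow> real \<Rightarrow> real \<Rightarrow> real \<Rightarrow> real \<Rightarrow> real" where
  "fcos r t \<phi> b \<theta> = - r * cos (2 * \<theta> * t - \<phi>) + b"

definition fcos' :: "real \<Rightarrow> real \<Rightarrow> real \<Rightarrow> real \<Rightarrow> real" where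
  "fcos' r t \<phi> \<theta> = 2 * r * t * sin (2 * \<theta> * t - \<phi>)"

definition minset :: "real \<Rightarrow> real \<Rightarrow> real set" where
  "minset t \<phi> = {(\<phi> + 2 * pi * of_int m) / (2 * t) | m :: int. True}"

definition wden :: "real \<Rightarrow> real \<Rightarrow> real \<Rightarrow> real" where
  "wden t \<phi> \<theta> = rmod (\<theta> - \<phi> / (2 * t) + pi / (2 * t)) (2 * pi / (2 * t)) - pi / (2 * t)"

definition wcurv :: "real \<Rightarrow> real \<Rightarrow> real \<Rightarrow> real \<Rightarrow> real" where
  "wcurv r t \<phi> \<theta> =
     (if \<theta> \<in> minset t \<phi> then 4 * t^2 * r else fcos' r t \<phi> \<theta> / wden t \<phi> \<theta>)"

definition qmaj :: "real \<Rightarrow> real \<Rightarrow> real \<Rightarrow> real \<Rightarrow> real \<Rightarrow> real \<Rightarrow> real" where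
  "qmaj r t \<phi> b \<theta>' \<theta> = fcos r t \<phi> b \<theta>' + fcos' r t \<phi> \<theta>' * (\<theta> - \<theta>')
      + 1/2 * wcurv r t \<phi> \<theta>' * (\<theta> - \<theta>')^2"

end

theory Submission imports Defs begin

lemma h_nonpos: assumes "0 \<le> x" "x \<le> pi" shows "x * cos x - sin x \<le> 0"
proof -
  have "(\<lambda>x. x * cos x - sin x) x \<le> (\<lambda>x. x * cos x - sin x) 0"
  proof (rule DERIV_nonpos_imp_nonincreasing[OF assms(1)])
    fix y assume y: "0 \<le> y" "y \<le> x"
    have d: "DERIV (\<lambda>x. x * cos x - sin x) y :> - y * sin y"
      by (auto intro!: derivative_eq_intros)
    have "- y * sin y \<le> 0" using y assms sin_ge_zero[of y] by simp
    then show "\<exists>d. DERIV (\<lambda>x. x * cos x - sin x) y :> d \<and> d \<le> 0" using d by blast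
  qed
  then show ?thesis by simp
qed

lemma sinc_mono: assumes "0 < a" "a \<le> b" "b \<le> pi" shows "sin b / b \<le> sin a / a"
proof (rule DERIV_nonpos_imp_nonincreasing[OF assms(2)])
  fix y assume y: "a \<le> y" "y \<le> b"
  hence yp: "y > 0" using assms by linarith
  have d0: "DERIV (\<lambda>x. sin x / x) y :> (cos y * y - sin y * 1) / (y * y)"
    using yp by (intro DERIV_divide DERIV_sin DERIV_ident) auto
  have "y * cos y - sin y \<le> 0" using h_nonpos[of y] y assms by simp
  hence "(cos y * y - sin y * 1) / (y * y) \<le> 0" using yp
    by (simp add: divide_nonpos_pos mult.commute)
  then show "\<exists>d. DERIV (\<lambda>x. sin x / x) y :> d \<and> d \<le> 0" using d0 by blast
qed

lemma key_pos: assumes v: "0 < v" "v \<le> pi"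
  shows "cos v - cos y \<le> sin v / (2*v) * (y^2 - v^2)"
proof -
  define s where "s = sin v / (2*v)"
  have s0: "s \<ge> 0" using sin_ge_zero[of v] v by (simp add: s_def)
  define F where "F x = s * x^2 + cos x" for x
  have dF: "DERIV F x :> 2*s*x - sin x" for x
    unfolding F_def by (auto intro!: derivative_eq_intros)
  have s2: "2*s = sin v / v" using v by (simp add: s_def)
  have main: "F v \<le> F y" if y0: "y \<ge> 0" for y
  proof -
    have disj: "y \<le> v \<or> (v \<le> y \<and> y \<le> pi) \<or> pi < y" by linarith
    then consider "y \<le> v" | "v \<le> y" "y \<le> pi" | "pi < y" by blast
    then show ?thesis
    proof cases
      case 1
      show ?thesis
      proof (rule DERIV_nonpos_imp_nonincreasing[OF 1])
        fix x assume x: "y \<le> x" "x \<le> v"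
        have "2*s*x \<le> sin x"
        proof (cases "x = 0")
          case True then show ?thesis by simp
        next
          case False
          hence xp: "x > 0" using x y0 by linarith
          have "sin v / v \<le> sin x / x" using sinc_mono[OF xp x(2) v(2)] .
          hence "sin v / v * x \<le> sin x" by (metis pos_le_divide_eq xp)
          then show ?thesis using s2 by simp
        qed
        then show "\<exists>d. DERIV F x :> d \<and> d \<le> 0" using dF[of x] by (intro exI[of _ "2*s*x - sin x"]) auto
      qed
    next
      case 2
      show ?thesis
      proof (rule DERIV_nonneg_imp_nondecreasing[OF 2(1)])
        fix x assume x: "v \<le> x" "x \<le> y"
        have xp: "x > 0" using x v by linarith
        have "sin x / x \<le> sin v / v" using sinc_mono[OF v(1) x(1)] x \<open>y \<le> pi\<close> by linarith
        hence "sin x \<le> sin v / v * x" by (metis pos_divide_le_eq xp)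
        then have "2*s*x - sin x \<ge> 0" using s2 by simp
        then show "\<exists>d. DERIV F x :> d \<and> d \<ge> 0" using dF[of x] by (intro exI[of _ "2*s*x - sin x"]) auto
      qed
    next
      case 3
      have "F v \<le> F pi"
      proof (rule DERIV_nonneg_imp_nondecreasing[OF v(2)])
        fix x assume x: "v \<le> x" "x \<le> pi"
        have xp: "x > 0" using x v by linarith
        have "sin x / x \<le> sin v / v" using sinc_mono[OF v(1) x(1) x(2)] .
        hence "sin x \<le> sin v / v * x" by (metis pos_divide_le_eq xp)
        then have "2*s*x - sin x \<ge> 0" using s2 by simp
        then show "\<exists>d. DERIV F x :> d \<and> d \<ge> 0" using dF[of x] by (intro exI[of _ "2*s*x - sin x"]) auto
      qed
      also have "F pi \<le> F y"
      proof -
        have "pi^2 \<le> y^2" using 3 by (intro power_mono) auto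
        hence "s * pi^2 \<le> s * y^2" using s0 by (rule mult_left_mono)
        moreover have "-1 \<le> cos y" by simp
        ultimately show ?thesis unfolding F_def cos_pi using cos_ge_minus_one[of y] by linarith
      qed
      finally show ?thesis .
    qed
  qed
  have "F v \<le> F \<bar>y\<bar>" by (rule main) simp
  also have "F \<bar>y\<bar> = F y" unfolding F_def by (cases "y \<ge> 0") auto
  finally have "s*v^2 + cos v \<le> s*y^2 + cos y" unfolding F_def .
  then have "cos v - cos y \<le> s*(y^2 - v^2)" unfolding right_diff_distrib by linarith
  then show ?thesis unfolding s_def .
qed

lemma key: assumes "v \<noteq> 0" "-pi \<le> v" "v \<le> pi"
  shows "- cos y \<le> - cos v + sin v * (y - v) + 1/2 * (sin v / v) * (y - v)^2"
proof -
  have eq: "sin v * (y - v) + 1/2 * (sin v / v) * (y - v)^2 = sin v / (2*v) * (y^2 - v^2)"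
    using assms(1) by (simp add: field_simps power2_eq_square)
  have "cos v - cos y \<le> sin v / (2*v) * (y^2 - v^2)"
  proof (cases "v > 0")
    case True then show ?thesis using key_pos assms by auto
  next
    case False
    hence "0 < -v" "-v \<le> pi" using assms by auto
    from key_pos[OF this, of "-y"] show ?thesis by simp
  qed
  then show ?thesis using eq by linarith
qed

lemma cos_quad: "1 - cos (x::real) \<le> x^2 / 2"
proof -
  have m: "(\<lambda>x. x^2/2 + cos x) 0 \<le> (\<lambda>x. x^2/2 + cos x) y" if "(y::real) \<ge> 0" for y
  proof (rule DERIV_nonneg_imp_nondecreasing[where f="\<lambda>x. x^2/2 + cos x"])
    show "0 \<le> y" using that by simp
  next
    fix z assume "0 \<le> z" "z \<le> y"
    then have "z - sin z \<ge> 0" using sin_x_le_x by simp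
    moreover have "DERIV (\<lambda>x. x^2/2 + cos x) z :> z - sin z"
      by (auto intro!: derivative_eq_intros)
    ultimately show "\<exists>d. DERIV (\<lambda>x. x^2/2 + cos x) z :> d \<and> d \<ge> 0" by auto
  qed
  have "1 - cos \<bar>x\<bar> \<le> \<bar>x\<bar>^2/2" using m[of "\<bar>x\<bar>"] by simp
  then show ?thesis by (cases "x \<ge> 0") auto
qed


lemma cos_shift: "cos (x - 2*pi*of_int k) = cos x" and sin_shift: "sin (x - 2*pi*of_int k) = sin x"
  by (simp_all add: cos_diff sin_diff)

lemma rmod_bounds: assumes "p > 0" shows "0 \<le> rmod a p" "rmod a p < p"
proof -
  have "of_int \<lfloor>a/p\<rfloor> \<le> a/p" "a/p < of_int \<lfloor>a/p\<rfloor> + 1" by linarith+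
  hence "of_int \<lfloor>a/p\<rfloor> * p \<le> a" "a < p * of_int \<lfloor>a/p\<rfloor> + p" using assms
    by (simp_all add: field_simps le_divide_eq)
  then show "0 \<le> rmod a p" "rmod a p < p" by (auto simp: rmod_def mult.commute)
qed

lemma part1:
  assumes r: "r \<ge> 0" and t: "t > 0" and c: "wden t \<phi> \<theta>' \<noteq> 0 \<or> \<theta>' \<in> minset t \<phi>"
  shows "fcos r t \<phi> b \<theta> \<le> qmaj r t \<phi> b \<theta>' \<theta>"
proof (cases "\<theta>' \<in> minset t \<phi>")
  case True
  then obtain m :: int where m: "\<theta>' = (\<phi> + 2*pi*of_int m) / (2*t)" unfolding minset_def by auto
  define y where "y = 2*t*(\<theta> - \<theta>')"
  have u': "2*\<theta>'*t - \<phi> = 2*pi*of_int m" using m t by (simp add: field_simps)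
  have u: "2*\<theta>*t - \<phi> = y + 2*pi*of_int m" using u' unfolding y_def by (simp add: algebra_simps)
  have "cos (2*\<theta>*t - \<phi>) = cos y" using u cos_shift[of "y + 2*pi*of_int m" m] by simp
  moreover have "cos (2*\<theta>'*t - \<phi>) = 1" "sin (2*\<theta>'*t - \<phi>) = 0" using u' by simp_all
  moreover have "qmaj r t \<phi> b \<theta>' \<theta> = b - r + r * (y^2/2)"
  proof -
    have y2: "y^2 = 4*t^2*(\<theta> - \<theta>')^2" unfolding y_def by (simp add: power_mult_distrib)
    show ?thesis
    using True calculation(2,3) unfolding qmaj_def wcurv_def fcos_def fcos'_def y2
    by (simp add: algebra_simps)
  qed
  moreover have "r * (1 - cos y) \<le> r * (y^2/2)" using mult_left_mono[OF cos_quad r] .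
  ultimately show ?thesis unfolding fcos_def by (simp add: algebra_simps)
next
  case False
  hence wd: "wden t \<phi> \<theta>' \<noteq> 0" using c by auto
  define a where "a = \<theta>' - \<phi> / (2 * t) + pi / (2 * t)"
  define p where "p = 2 * pi / (2 * t)"
  define k where "k = \<lfloor>a/p\<rfloor>"
  have pp: "p > 0" using t by (simp add: p_def)
  define v where "v = 2*\<theta>'*t - \<phi> - 2*pi*of_int k"
  have wa: "wden t \<phi> \<theta>' = rmod a p - pi/(2*t)" unfolding wden_def a_def p_def by simp
  have rk: "rmod a p = a - p * of_int k" unfolding rmod_def k_def by simp
  have rv0: "a - p * of_int k = (v + pi) / (2*t)"
    unfolding a_def p_def v_def using t by (simp add: field_simps)
  have rv: "rmod a p = (v + pi) / (2*t)" using rk rv0 by simp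
  have wv: "wden t \<phi> \<theta>' = v / (2*t)" unfolding wa rv by (simp add: add_divide_distrib)
  have b1: "0 \<le> rmod a p" "rmod a p < p" using rmod_bounds[OF pp] by auto
  have b2: "0 \<le> (v + pi) / (2*t)" "(v + pi) / (2*t) < p" using b1 rv by simp_all
  have vb: "-pi \<le> v" "v \<le> pi" using b2 t unfolding p_def by (simp_all add: field_simps)
  have v0: "v \<noteq> 0" using wd wv by auto
  define y where "y = 2*\<theta>*t - \<phi> - 2*pi*of_int k"
  have cy: "cos (2*\<theta>*t - \<phi>) = cos y" unfolding y_def by (rule cos_shift[symmetric])
  have cv: "cos (2*\<theta>'*t - \<phi>) = cos v" "sin (2*\<theta>'*t - \<phi>) = sin v"
    unfolding v_def by (simp_all add: cos_shift sin_shift)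
  have d: "\<theta> - \<theta>' = (y - v) / (2*t)" unfolding y_def v_def using t by (simp add: field_simps)
  have w: "wcurv r t \<phi> \<theta>' = 4*t^2*r * (sin v / v)"
    using False unfolding wcurv_def fcos'_def wv cv using t v0 by (simp add: field_simps power2_eq_square)
  have q: "qmaj r t \<phi> b \<theta>' \<theta> = b + r * (- cos v + sin v * (y - v) + 1/2 * (sin v / v) * (y - v)^2)"
  proof -
    have e2: "2*r*t*sin v * ((y - v) / (2*t)) = r * (sin v * (y - v))" using t by simp
    have e3: "1/2 * (4*t^2*r * (sin v / v)) * ((y - v) / (2*t))^2 = r * (1/2 * (sin v / v) * (y - v)^2)"
      using t by (simp add: power_divide power_mult_distrib)
    show ?thesis unfolding qmaj_def w d fcos_def fcos'_def cv e2 e3 by (simp add: algebra_simps)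
  qed
  have "r * (- cos y) \<le> r * (- cos v + sin v * (y - v) + 1/2 * (sin v / v) * (y - v)^2)"
    using mult_left_mono[OF key[OF v0 vb] r] .
  then show ?thesis unfolding q fcos_def cy by simp
qed

lemma part1eq: "qmaj r t \<phi> b \<theta>' \<theta>' = fcos r t \<phi> b \<theta>'"
  unfolding qmaj_def by simp


theorem mainTheorem3:
  shows "(\<forall>r t \<phi> b \<theta>'. r \<ge> 0 \<and> t > 0 \<and> (wden t \<phi> \<theta>' \<noteq> 0 \<or> \<theta>' \<in> minset t \<phi>) \<longrightarrow>
            qmaj r t \<phi> b \<theta>' \<theta>' = fcos r t \<phi> b \<theta>' \<and>
            (\<forall>\<theta>. qmaj r t \<phi> b \<theta>' \<theta> \<ge> fcos r t \<phi> b \<theta>))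
       \<and> (\<forall>(T::nat) (rs::nat \<Rightarrow> real) (ts::nat \<Rightarrow> real) (\<phi>s::nat \<Rightarrow> real) (bs::nat \<Rightarrow> real) \<theta>'.
            (\<forall>i\<in>{1..T}. rs i \<ge> 0 \<and> ts i > 0 \<and>
                 (wden (ts i) (\<phi>s i) \<theta>' \<noteq> 0 \<or> \<theta>' \<in> minset (ts i) (\<phi>s i))) \<and>
            (\<Sum>i=1..T. wcurv (rs i) (ts i) (\<phi>s i) \<theta>') > 0 \<longrightarrow>
            (let \<theta>p = \<theta>' - (\<Sum>i=1..T. fcos' (rs i) (ts i) (\<phi>s i) \<theta>')
                              / (\<Sum>i=1..T. wcurv (rs i) (ts i) (\<phi>s i) \<theta>')
             in (\<Sum>i=1..T. fcos (rs i) (ts i) (\<phi>s i) (bs i) \<theta>p)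
                  \<le> (\<Sum>i=1..T. fcos (rs i) (ts i) (\<phi>s i) (bs i) \<theta>')))"
proof (rule conjI)
  show "\<forall>r t \<phi> b \<theta>'. r \<ge> 0 \<and> t > 0 \<and> (wden t \<phi> \<theta>' \<noteq> 0 \<or> \<theta>' \<in> minset t \<phi>) \<longrightarrow>
            qmaj r t \<phi> b \<theta>' \<theta>' = fcos r t \<phi> b \<theta>' \<and>
            (\<forall>\<theta>. qmaj r t \<phi> b \<theta>' \<theta> \<ge> fcos r t \<phi> b \<theta>)"
  proof (intro allI impI conjI)
    fix r t \<phi> b \<theta>' \<theta> :: real
    assume A: "0 \<le> r \<and> 0 < t \<and> (wden t \<phi> \<theta>' \<noteq> 0 \<or> \<theta>' \<in> minset t \<phi>)"
    show "fcos r t \<phi> b \<theta> \<le> qmaj r t \<phi> b \<theta>' \<theta>" using A by (intro part1) auto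
  next
    fix r t \<phi> b \<theta>' :: real
    show "qmaj r t \<phi> b \<theta>' \<theta>' = fcos r t \<phi> b \<theta>'" by (rule part1eq)
  qed
next
  show "\<forall>(T::nat) (rs::nat \<Rightarrow> real) (ts::nat \<Rightarrow> real) (\<phi>s::nat \<Rightarrow> real) (bs::nat \<Rightarrow> real) \<theta>'.
            (\<forall>i\<in>{1..T}. rs i \<ge> 0 \<and> ts i > 0 \<and>
                 (wden (ts i) (\<phi>s i) \<theta>' \<noteq> 0 \<or> \<theta>' \<in> minset (ts i) (\<phi>s i))) \<and>
            (\<Sum>i=1..T. wcurv (rs i) (ts i) (\<phi>s i) \<theta>') > 0 \<longrightarrow>
            (let \<theta>p = \<theta>' - (\<Sum>i=1..T. fcos' (rs i) (ts i) (\<phi>s i) \<theta>')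
                              / (\<Sum>i=1..T. wcurv (rs i) (ts i) (\<phi>s i) \<theta>')
             in (\<Sum>i=1..T. fcos (rs i) (ts i) (\<phi>s i) (bs i) \<theta>p)
                  \<le> (\<Sum>i=1..T. fcos (rs i) (ts i) (\<phi>s i) (bs i) \<theta>'))"
  proof (intro allI impI)
  fix T :: nat and rs ts \<phi>s bs :: "nat \<Rightarrow> real" and \<theta>' :: real
  assume H: "(\<forall>i\<in>{1..T}. rs i \<ge> 0 \<and> ts i > 0 \<and>
                 (wden (ts i) (\<phi>s i) \<theta>' \<noteq> 0 \<or> \<theta>' \<in> minset (ts i) (\<phi>s i))) \<and>
            (\<Sum>i=1..T. wcurv (rs i) (ts i) (\<phi>s i) \<theta>') > 0"
  define G where "G = (\<Sum>i=1..T. fcos' (rs i) (ts i) (\<phi>s i) \<theta>')"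
  define W where "W = (\<Sum>i=1..T. wcurv (rs i) (ts i) (\<phi>s i) \<theta>')"
  define S where "S = (\<Sum>i=1..T. fcos (rs i) (ts i) (\<phi>s i) (bs i) \<theta>')"
  define \<theta>p where "\<theta>p = \<theta>' - G / W"
  have W0: "W > 0" using H W_def by simp
  have "(\<Sum>i=1..T. fcos (rs i) (ts i) (\<phi>s i) (bs i) \<theta>p)
        \<le> (\<Sum>i=1..T. qmaj (rs i) (ts i) (\<phi>s i) (bs i) \<theta>' \<theta>p)"
  proof (rule sum_mono)
    fix i assume "i \<in> {1..T}"
    then show "fcos (rs i) (ts i) (\<phi>s i) (bs i) \<theta>p \<le> qmaj (rs i) (ts i) (\<phi>s i) (bs i) \<theta>' \<theta>p"
      using H by (intro part1) auto
  qed
  also have "\<dots> = S + G * (\<theta>p - \<theta>') + 1/2 * W * (\<theta>p - \<theta>')^2"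
    unfolding qmaj_def S_def G_def W_def
    by (simp add: sum.distrib sum_distrib_right sum_distrib_left)
  also have "\<dots> = S - G^2 / (2*W)"
    unfolding \<theta>p_def using W0 by (simp add: field_simps power2_eq_square)
  also have "\<dots> \<le> S" using W0 by simp
  finally show "let \<theta>p = \<theta>' - (\<Sum>i=1..T. fcos' (rs i) (ts i) (\<phi>s i) \<theta>')
                              / (\<Sum>i=1..T. wcurv (rs i) (ts i) (\<phi>s i) \<theta>')
             in (\<Sum>i=1..T. fcos (rs i) (ts i) (\<phi>s i) (bs i) \<theta>p)
                  \<le> (\<Sum>i=1..T. fcos (rs i) (ts i) (\<phi>s i) (bs i) \<theta>')"
    unfolding Let_def \<theta>p_def G_def W_def S_def .
  qed
qed

end
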